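(* Let $E$ be a disjoint combination of $E_1,\dots,E_n$ and fix $i$. If $M$ is a quasi-$E_i$ term and $M\to^*_{R_E}N$, then $N$ is a quasi-$E_i$ term and $F_{E_i}(M)\to^*_{R_E}F_{E_i}(N)$.
   Context: Fix names, variables, and constructors $\mathsf{pub},\mathsf{sign},\mathsf{blind},\langle\cdot,\cdot\rangle,\{\cdot\}_\cdot$. $E_1,\dots,E_n$ are equational theories with pairwise disjoint signatures $\Sigma_{E_i}$ (disjoint from the constructors), each containing at most one associative-commutative (AC) binary symbol $\oplus_i$ and each AC-convergent; $E$ is their union, presented by the rewrite system $R_E$ (the union of the individual rewrite systems) which is terminating and confluent modulo AC of all $\oplus_i$; $\to_{R_E}$ is one rewrite step modulo AC, $\to^*_{R_E}$ its reflexive-transitive closure; $\approx_E$ is equality modulo $E$. Terms are built from names, variables, the constructors and symbols of $\Sigma_E=\bigcup_i\Sigma_{E_i}$. A term is $E_i$-alien if its head symbol is not in $\Sigma_{E_i}$. A term $M$ is a quasi-$E_i$ term if every $E_i$-alien subterm of $M$ is in $E$-normal form. Fix a function $v_E$ assigning to each ground term a variable such that $v_E(M)=v_E(N)$ iff $M\approx_E N$. The $E_i$ abstraction function $F_{E_i}$ on ground terms is defined by: $F_{E_i}(u)=u$ if $u$ is a name; $F_{E_i}(g(u_1,\dots,u_k))=g(F_{E_i}(u_1),\dots,F_{E_i}(u_k))$ if $g\in\Sigma_{E_i}$; $F_{E_i}(u)=v_E(u)$ otherwise. *)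

theory Defs
  imports Main
begin

datatype cons = Pub | Sign | Blind | Pair | Enc

text \<open>Each theory symbol f belongs to the signature of exactly one theory,
  given by an index function thy (so the signatures are pairwise disjoint
  and disjoint from the constructors by construction).\<close>
datatype 'f sym = Cstr cons | Th 'f

datatype ('n, 'v, 'f) trm = Nm 'n | Var 'v | App "'f sym" "('n, 'v, 'f) trm list"

fun subst :: "('v \<Rightarrow> ('n, 'v, 'f) trm) \<Rightarrow> ('n, 'v, 'f) trm \<Rightarrow> ('n, 'v, 'f) trm" where
  "subst \<sigma> (Nm a) = Nm a"
| "subst \<sigma> (Var x) = \<sigma> x"
| "subst \<sigma> (App f ts) = App f (map (subst \<sigma>) ts)"

fun vars :: "('n, 'v, 'f) trm \<Rightarrow> 'v set" where
  "vars (Nm a) = {}"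
| "vars (Var x) = {x}"
| "vars (App f ts) = \<Union> (set (map vars ts))"

definition ground :: "('n, 'v, 'f) trm \<Rightarrow> bool" where
  "ground t \<longleftrightarrow> vars t = {}"

fun subterms :: "('n, 'v, 'f) trm \<Rightarrow> ('n, 'v, 'f) trm set" where
  "subterms (Nm a) = {Nm a}"
| "subterms (Var x) = {Var x}"
| "subterms (App f ts) = insert (App f ts) (\<Union> (set (map subterms ts)))"

fun pure_over :: "('f \<Rightarrow> bool) \<Rightarrow> ('n, 'v, 'f) trm \<Rightarrow> bool" where
  "pure_over P (Nm a) = False"
| "pure_over P (Var x) = True"
| "pure_over P (App (Cstr c) ts) = False"
| "pure_over P (App (Th f) ts) = (P f \<and> list_all (pure_over P) ts)"

inductive_set ctxt_cl :: "(('n, 'v, 'f) trm \<times> ('n, 'v, 'f) trm) set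
    \<Rightarrow> (('n, 'v, 'f) trm \<times> ('n, 'v, 'f) trm) set" for R where
  base: "(s, t) \<in> R \<Longrightarrow> (s, t) \<in> ctxt_cl R"
| ctxt: "(s, t) \<in> ctxt_cl R \<Longrightarrow> (App f (ss @ s # us), App f (ss @ t # us)) \<in> ctxt_cl R"

definition ac_root :: "'f set \<Rightarrow> (('n, 'v, 'f) trm \<times> ('n, 'v, 'f) trm) set" where
  "ac_root A =
     {(App (Th f) [x, y], App (Th f) [y, x]) | f x y. f \<in> A}
   \<union> {(App (Th f) [App (Th f) [x, y], z], App (Th f) [x, App (Th f) [y, z]]) | f x y z. f \<in> A}"

definition ac_eq :: "'f set \<Rightarrow> (('n, 'v, 'f) trm \<times> ('n, 'v, 'f) trm) set" where
  "ac_eq A = (ctxt_cl (ac_root A) \<union> (ctxt_cl (ac_root A))\<inverse>)\<^sup>*"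

definition rinst :: "(('n, 'v, 'f) trm \<times> ('n, 'v, 'f) trm) set
    \<Rightarrow> (('n, 'v, 'f) trm \<times> ('n, 'v, 'f) trm) set" where
  "rinst R = {(subst \<sigma> l, subst \<sigma> r) | \<sigma> l r. (l, r) \<in> R}"

definition rstep :: "(('n, 'v, 'f) trm \<times> ('n, 'v, 'f) trm) set
    \<Rightarrow> (('n, 'v, 'f) trm \<times> ('n, 'v, 'f) trm) set" where
  "rstep R = ctxt_cl (rinst R)"

definition rstep_mod :: "'f set \<Rightarrow> (('n, 'v, 'f) trm \<times> ('n, 'v, 'f) trm) set
    \<Rightarrow> (('n, 'v, 'f) trm \<times> ('n, 'v, 'f) trm) set" where
  "rstep_mod A R = ac_eq A O rstep R O ac_eq A"

definition NF_mod :: "'f set \<Rightarrow> (('n, 'v, 'f) trm \<times> ('n, 'v, 'f) trm) set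
    \<Rightarrow> ('n, 'v, 'f) trm \<Rightarrow> bool" where
  "NF_mod A R t \<longleftrightarrow> \<not> (\<exists>u. (t, u) \<in> rstep_mod A R)"

definition eq_mod :: "'f set \<Rightarrow> (('n, 'v, 'f) trm \<times> ('n, 'v, 'f) trm) set
    \<Rightarrow> (('n, 'v, 'f) trm \<times> ('n, 'v, 'f) trm) set" where
  "eq_mod A R = (rstep R \<union> (rstep R)\<inverse> \<union> ctxt_cl (ac_root A) \<union> (ctxt_cl (ac_root A))\<inverse>)\<^sup>*"

definition terminating_mod :: "'f set \<Rightarrow> (('n, 'v, 'f) trm \<times> ('n, 'v, 'f) trm) set \<Rightarrow> bool" where
  "terminating_mod A R \<longleftrightarrow> wf ((rstep_mod A R)\<inverse>)"

definition confluent_mod :: "'f set \<Rightarrow> (('n, 'v, 'f) trm \<times> ('n, 'v, 'f) trm) set \<Rightarrow> bool" where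
  "confluent_mod A R \<longleftrightarrow>
     (\<forall>s t u. (s, t) \<in> (rstep_mod A R)\<^sup>* \<and> (s, u) \<in> (rstep_mod A R)\<^sup>* \<longrightarrow>
        (\<exists>t' u'. (t, t') \<in> (rstep_mod A R)\<^sup>* \<and> (u, u') \<in> (rstep_mod A R)\<^sup>* \<and> (t', u') \<in> ac_eq A))"

definition rule_wf :: "('n, 'v, 'f) trm \<times> ('n, 'v, 'f) trm \<Rightarrow> bool" where
  "rule_wf lr \<longleftrightarrow> (\<forall>x. fst lr \<noteq> Var x) \<and> vars (snd lr) \<subseteq> vars (fst lr)"

definition alien :: "('f \<Rightarrow> nat) \<Rightarrow> nat \<Rightarrow> ('n, 'v, 'f) trm \<Rightarrow> bool" where
  "alien thy i t \<longleftrightarrow> \<not> (\<exists>g ts. t = App (Th g) ts \<and> thy g = i)"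

definition quasi :: "('f \<Rightarrow> nat) \<Rightarrow> nat \<Rightarrow> 'f set \<Rightarrow> (('n, 'v, 'f) trm \<times> ('n, 'v, 'f) trm) set
    \<Rightarrow> ('n, 'v, 'f) trm \<Rightarrow> bool" where
  "quasi thy i A R M \<longleftrightarrow> (\<forall>u \<in> subterms M. alien thy i u \<longrightarrow> NF_mod A R u)"

text \<open>The E_i abstraction function (only meaningful on ground terms).\<close>
fun absF :: "('f \<Rightarrow> nat) \<Rightarrow> nat \<Rightarrow> (('n, 'v, 'f) trm \<Rightarrow> 'v) \<Rightarrow> ('n, 'v, 'f) trm \<Rightarrow> ('n, 'v, 'f) trm" where
  "absF thy i vE (Nm a) = Nm a"
| "absF thy i vE (Var x) = Var (vE (Var x))"
| "absF thy i vE (App (Cstr c) ts) = Var (vE (App (Cstr c) ts))"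
| "absF thy i vE (App (Th g) ts) =
     (if thy g = i then App (Th g) (map (absF thy i vE) ts) else Var (vE (App (Th g) ts)))"

end

theory Submission
  imports Defs
begin

lemma ac_eq_sym: "(s,t) \<in> ac_eq A \<Longrightarrow> (t,s) \<in> ac_eq A"
proof -
  let ?S = "ctxt_cl (ac_root A) \<union> (ctxt_cl (ac_root A))\<inverse>"
  assume "(s,t) \<in> ac_eq A"
  hence "(t,s) \<in> (?S\<inverse>)\<^sup>*" unfolding ac_eq_def by (simp add: rtrancl_converse)
  moreover have "?S\<inverse> = ?S" by auto
  ultimately show ?thesis unfolding ac_eq_def by metis
qed

lemma ac_eq_trans: "(s,t) \<in> ac_eq A \<Longrightarrow> (t,u) \<in> ac_eq A \<Longrightarrow> (s,u) \<in> ac_eq A"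
  unfolding ac_eq_def by (rule rtrancl_trans)

lemma ac_eq_refl: "(s,s) \<in> ac_eq A"
  unfolding ac_eq_def by simp

lemma rstep_mod_ac: "(s,s') \<in> ac_eq A \<Longrightarrow> (s',t) \<in> rstep_mod A R \<Longrightarrow> (s,t) \<in> rstep_mod A R"
  unfolding rstep_mod_def using ac_eq_trans by blast

lemma NF_ac: "(s,t) \<in> ac_eq A \<Longrightarrow> NF_mod A R s \<Longrightarrow> NF_mod A R t"
  unfolding NF_mod_def using ac_eq_sym rstep_mod_ac by blast

lemma ac_eq_ctxt: "(s,t) \<in> ac_eq A \<Longrightarrow> (App f (ss@s#us), App f (ss@t#us)) \<in> ac_eq A"
  unfolding ac_eq_def
proof (induction rule: rtrancl_induct)
  case base
  then show ?case by simp
next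
  case (step y z)
  then have "(App f (ss@y#us), App f (ss@z#us)) \<in> ctxt_cl (ac_root A) \<union> (ctxt_cl (ac_root A))\<inverse>"
    by (auto intro: ctxt_cl.ctxt)
  with step.IH show ?case by (rule rtrancl_into_rtrancl)
qed

lemma rstep_mod_ctxt: "(s,t) \<in> rstep_mod A R \<Longrightarrow> (App f (ss@s#us), App f (ss@t#us)) \<in> rstep_mod A R"
  unfolding rstep_mod_def rstep_def
  using ac_eq_ctxt ctxt_cl.ctxt by (meson relcomp.simps)

lemma subterms_refl: "t \<in> subterms t"
  by (cases t) auto

lemma subterms_trans: "u \<in> subterms t \<Longrightarrow> v \<in> subterms u \<Longrightarrow> v \<in> subterms t"
  by (induction t) auto

lemma NF_sub: "u \<in> subterms t \<Longrightarrow> NF_mod A R t \<Longrightarrow> NF_mod A R u"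
proof (induction t)
  case (App f ts)
  show ?case
  proof (cases "u = App f ts")
    case True then show ?thesis using App by simp
  next
    case False
    then obtain t' where t': "t' \<in> set ts" "u \<in> subterms t'" using App.prems by auto
    have "NF_mod A R t'"
    proof (rule ccontr)
      assume "\<not> NF_mod A R t'"
      then obtain v where "(t', v) \<in> rstep_mod A R" unfolding NF_mod_def by auto
      moreover obtain ss us where "ts = ss @ t' # us" using t'(1) by (meson split_list)
      ultimately have "(App f ts, App f (ss @ v # us)) \<in> rstep_mod A R"
        using rstep_mod_ctxt by metis
      then show False using App.prems(2) unfolding NF_mod_def by auto
    qed
    then show ?thesis using App.IH t' by blast
  qed
qed auto

lemma Q_sub: "quasi thy i A R t \<Longrightarrow> u \<in> subterms t \<Longrightarrow> quasi thy i A R u"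
  unfolding quasi_def using subterms_trans by blast

lemma Q_App: "quasi thy i A R (App f ts) \<longleftrightarrow>
   (alien thy i (App f ts) \<longrightarrow> NF_mod A R (App f ts)) \<and> (\<forall>t\<in>set ts. quasi thy i A R t)"
  unfolding quasi_def by auto

lemma NF_Q: "NF_mod A R t \<Longrightarrow> quasi thy i A R t"
  unfolding quasi_def using NF_sub by blast

lemma alien_App: "alien thy i (App f ss) \<longleftrightarrow> alien thy i (App f ts)"
  unfolding alien_def by auto

lemma Q_ctxt:
  assumes "(s,t) \<in> ctxt_cl X" "quasi thy i A R s"
    and NFp: "\<And>a b. (a,b) \<in> ctxt_cl X \<Longrightarrow> NF_mod A R a \<Longrightarrow> NF_mod A R b"
    and bs: "\<And>a b. (a,b) \<in> X \<Longrightarrow> quasi thy i A R a \<Longrightarrow> quasi thy i A R b"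
  shows "quasi thy i A R t"
  using assms(1,2)
proof (induction rule: ctxt_cl.induct)
  case (base s t)
  then show ?case using bs by blast
next
  case (ctxt s t f ss us)
  have Qs: "quasi thy i A R s" using ctxt.prems by (simp add: Q_App)
  have Qt: "quasi thy i A R t" using ctxt.IH Qs by blast
  have step: "(App f (ss @ s # us), App f (ss @ t # us)) \<in> ctxt_cl X"
    using ctxt.hyps by (rule ctxt_cl.ctxt)
  have "alien thy i (App f (ss @ t # us)) \<longrightarrow> NF_mod A R (App f (ss @ t # us))"
    using ctxt.prems NFp[OF step] alien_App Q_App by metis
  moreover have "\<forall>u\<in>set (ss @ t # us). quasi thy i A R u"
    using ctxt.prems Qt by (auto simp: Q_App)
  ultimately show ?case using Q_App by blast
qed

lemma ctxt_cl_conv: "(s,t) \<in> ctxt_cl (X\<inverse>) \<Longrightarrow> (t,s) \<in> ctxt_cl X"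
  by (induction rule: ctxt_cl.induct) (auto intro: ctxt_cl.intros)

lemma Q_ac_root: "(a,b) \<in> ac_root A \<Longrightarrow> quasi thy i A R a \<Longrightarrow> quasi thy i A R b"
proof -
  assume ab: "(a,b) \<in> ac_root A" and Qa: "quasi thy i A R a"
  have "(a,b) \<in> ac_eq A" using ab unfolding ac_eq_def by (auto intro: ctxt_cl.base)
  then have nf: "NF_mod A R a \<Longrightarrow> NF_mod A R b" using NF_ac by blast
  show ?thesis using ab Qa nf NF_Q[of A R b thy i]
    unfolding ac_root_def by (auto simp: Q_App alien_def)
qed

lemma Q_ac_root_conv: "(b,a) \<in> ac_root A \<Longrightarrow> quasi thy i A R a \<Longrightarrow> quasi thy i A R b"
proof -
  assume ab: "(b,a) \<in> ac_root A" and Qa: "quasi thy i A R a"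
  have "(a,b) \<in> ac_eq A" using ab unfolding ac_eq_def by (auto intro: ctxt_cl.base)
  then have nf: "NF_mod A R a \<Longrightarrow> NF_mod A R b" using NF_ac by blast
  show ?thesis using ab Qa nf NF_Q[of A R b thy i]
    unfolding ac_root_def by (auto simp: Q_App alien_def)
qed

lemma Q_ac_eq: "(s,t) \<in> ac_eq A \<Longrightarrow> quasi thy i A R s \<Longrightarrow> quasi thy i A R t"
proof -
  assume st: "(s,t) \<in> ac_eq A" and Qs: "quasi thy i A R s"
  show ?thesis using st Qs unfolding ac_eq_def
  proof (induction rule: rtrancl_induct)
    case base then show ?case by simp
  next
    case (step y z)
    have Qy: "quasi thy i A R y" using step by blast
    show ?case
    proof (cases "(y,z) \<in> ctxt_cl (ac_root A)")
      case True
      show ?thesis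
      proof (rule Q_ctxt[OF True Qy])
        fix a b assume "(a,b) \<in> ctxt_cl (ac_root A)" "NF_mod A R a"
        then show "NF_mod A R b" using NF_ac unfolding ac_eq_def by blast
      next
        fix a b assume "(a,b) \<in> ac_root A" "quasi thy i A R a"
        then show "quasi thy i A R b" by (rule Q_ac_root)
      qed
    next
      case False
      then have zy: "(z,y) \<in> ctxt_cl (ac_root A)" using step by auto
      have yz: "(y,z) \<in> ctxt_cl ((ac_root A)\<inverse>)" using ctxt_cl_conv[of z y "(ac_root A)\<inverse>"] zy by simp
      show ?thesis
      proof (rule Q_ctxt[OF yz Qy])
        fix a b assume "(a,b) \<in> ctxt_cl ((ac_root A)\<inverse>)" "NF_mod A R a"
        then show "NF_mod A R b" using NF_ac ctxt_cl_conv unfolding ac_eq_def by blast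
      next
        fix a b assume "(a,b) \<in> (ac_root A)\<inverse>" "quasi thy i A R a"
        then show "quasi thy i A R b" using Q_ac_root_conv by blast
      qed
    qed
  qed
qed

lemma var_subterm: "x \<in> vars l \<Longrightarrow> \<sigma> x \<in> subterms (subst \<sigma> l)"
  by (induction l) (auto simp: subterms_refl)

lemma Q_subst: "pure_over (\<lambda>f. thy f = i) r \<Longrightarrow> (\<forall>x\<in>vars r. quasi thy i A R (\<sigma> x))
   \<Longrightarrow> quasi thy i A R (subst \<sigma> r)"
proof (induction r)
  case (App f ts)
  then show ?case
    by (cases f) (auto simp: Q_App alien_def list_all_iff)
qed auto

lemma vars_subst: "vars (subst \<sigma> t) = (\<Union>x\<in>vars t. vars (\<sigma> x))"
  by (induction t) auto

lemma rinst_step_mod: "(a,b) \<in> ctxt_cl (rinst R) \<Longrightarrow> (a,b) \<in> rstep_mod A R"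
  unfolding rstep_mod_def rstep_def using ac_eq_refl by blast

lemma rinst_notNF: "(a,b) \<in> ctxt_cl (rinst R) \<Longrightarrow> \<not> NF_mod A R a"
  unfolding NF_mod_def using rinst_step_mod by blast

lemma rule_shape:
  assumes rs: "\<And>l r. (l,r) \<in> R \<Longrightarrow> \<exists>j. pure_over (\<lambda>f. thy f = j) l \<and> pure_over (\<lambda>f. thy f = j) r \<and> rule_wf (l,r)"
    and lr: "(l,r) \<in> R"
  obtains g ls where "l = App (Th g) ls" "pure_over (\<lambda>f. thy f = thy g) l"
     "pure_over (\<lambda>f. thy f = thy g) r" "vars r \<subseteq> vars l"
proof -
  obtain j where j: "pure_over (\<lambda>f. thy f = j) l" "pure_over (\<lambda>f. thy f = j) r" "rule_wf (l,r)"
    using rs[OF lr] by blast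
  show ?thesis
  proof (cases l)
    case (Nm a) then show ?thesis using j by simp
  next
    case (Var x) then show ?thesis using j unfolding rule_wf_def by simp
  next
    case (App f ls)
    then show ?thesis
    proof (cases f)
      case (Cstr c) then show ?thesis using j App by simp
    next
      case (Th g)
      then have "thy g = j" using j App by simp
      show ?thesis
      proof (rule that[of g ls])
        show "l = App (Th g) ls" using App Th by simp
        show "pure_over (\<lambda>f. thy f = thy g) l" using j(1) \<open>thy g = j\<close> by simp
        show "pure_over (\<lambda>f. thy f = thy g) r" using j(2) \<open>thy g = j\<close> by simp
        show "vars r \<subseteq> vars l" using j(3) unfolding rule_wf_def by simp
      qed
    qed
  qed
qed

lemma Q_rinst:
  assumes rs: "\<And>l r. (l,r) \<in> R \<Longrightarrow> \<exists>j. pure_over (\<lambda>f. thy f = j) l \<and> pure_over (\<lambda>f. thy f = j) r \<and> rule_wf (l,r)"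
    and ab: "(a,b) \<in> rinst R" and Qa: "quasi thy i A R a"
  shows "quasi thy i A R b"
proof -
  obtain \<sigma> l r where a: "a = subst \<sigma> l" and b: "b = subst \<sigma> r" and lr: "(l,r) \<in> R"
    using ab unfolding rinst_def by blast
  obtain g ls where l: "l = App (Th g) ls" and pl: "pure_over (\<lambda>f. thy f = thy g) l"
    and pr: "pure_over (\<lambda>f. thy f = thy g) r" and vr: "vars r \<subseteq> vars l"
    using rule_shape[OF rs lr] by blast
  have "(a,b) \<in> ctxt_cl (rinst R)" using ab by (rule ctxt_cl.base)
  then have "\<not> NF_mod A R a" by (rule rinst_notNF)
  moreover have "alien thy i a \<longrightarrow> NF_mod A R a"
    using Qa subterms_refl[of a] unfolding quasi_def by blast
  ultimately have "\<not> alien thy i a" by blast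
  moreover have "a = App (Th g) (map (subst \<sigma>) ls)" using a l by simp
  ultimately have gi: "thy g = i" unfolding alien_def by blast
  have "\<forall>x\<in>vars r. quasi thy i A R (\<sigma> x)"
  proof
    fix x assume "x \<in> vars r"
    then have "x \<in> vars l" using vr by blast
    then have "\<sigma> x \<in> subterms a" unfolding a by (rule var_subterm)
    then show "quasi thy i A R (\<sigma> x)" using Q_sub Qa by blast
  qed
  moreover have "pure_over (\<lambda>f. thy f = i) r" using pr gi by simp
  ultimately show ?thesis unfolding b using Q_subst by blast
qed

lemma F_pure: "pure_over (\<lambda>f. thy f = i) l \<Longrightarrow>
   absF thy i vE (subst \<sigma> l) = subst (\<lambda>x. absF thy i vE (\<sigma> x)) l"
proof (induction l)
  case (App f ts)
  then show ?case by (cases f) (auto simp: list_all_iff)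
qed auto

lemma F_ac_step:
  assumes "(s,t) \<in> ctxt_cl (ac_root A)" "ground s" "ground t"
    and hv: "\<And>s t. (s,t) \<in> ctxt_cl (ac_root A) \<Longrightarrow> ground s \<Longrightarrow> ground t \<Longrightarrow> vE s = vE t"
  shows "absF thy i vE s = absF thy i vE t \<or> (absF thy i vE s, absF thy i vE t) \<in> ctxt_cl (ac_root A)"
  using assms(1,2,3)
proof (induction rule: ctxt_cl.induct)
  case (base s t)
  have e: "vE s = vE t" using hv base by (auto intro: ctxt_cl.base)
  have "(\<exists>f x y. s = App (Th f) [x, y] \<and> t = App (Th f) [y, x] \<and> f \<in> A) \<or>
        (\<exists>f x y z. s = App (Th f) [App (Th f) [x, y], z] \<and> t = App (Th f) [x, App (Th f) [y, z]] \<and> f \<in> A)"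
    using base(1) unfolding ac_root_def by blast
  then show ?case
  proof (elim disjE exE conjE)
    fix f x y assume "s = App (Th f) [x, y]" "t = App (Th f) [y, x]" "f \<in> A"
    then show ?thesis using e by (cases "thy f = i") (auto intro!: ctxt_cl.base simp: ac_root_def)
  next
    fix f x y z assume "s = App (Th f) [App (Th f) [x, y], z]" "t = App (Th f) [x, App (Th f) [y, z]]" "f \<in> A"
    then show ?thesis using e by (cases "thy f = i") (auto intro!: ctxt_cl.base simp: ac_root_def)
  qed
next
  case (ctxt s t f ss us)
  have st: "(App f (ss @ s # us), App f (ss @ t # us)) \<in> ctxt_cl (ac_root A)"
    using ctxt.hyps by (rule ctxt_cl.ctxt)
  have e: "vE (App f (ss @ s # us)) = vE (App f (ss @ t # us))" using hv[OF st] ctxt.prems by blast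
  have gs: "ground s" "ground t" using ctxt.prems unfolding ground_def by auto
  show ?case
  proof (cases f)
    case (Cstr c) then show ?thesis using e by simp
  next
    case (Th g)
    show ?thesis
    proof (cases "thy g = i")
      case True
      from ctxt.IH[OF gs] show ?thesis
      proof
        assume "absF thy i vE s = absF thy i vE t"
        then show ?thesis using Th True by simp
      next
        assume "(absF thy i vE s, absF thy i vE t) \<in> ctxt_cl (ac_root A)"
        then have "(App (Th g) (map (absF thy i vE) ss @ absF thy i vE s # map (absF thy i vE) us),
                    App (Th g) (map (absF thy i vE) ss @ absF thy i vE t # map (absF thy i vE) us)) \<in> ctxt_cl (ac_root A)"
          by (rule ctxt_cl.ctxt)
        then show ?thesis using Th True by simp
      qed
    next
      case False then show ?thesis using e Th by simp
    qed
  qed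
qed

lemma ac_vars: "(s,t) \<in> ctxt_cl (ac_root A) \<Longrightarrow> vars t = vars s"
  by (induction rule: ctxt_cl.induct) (auto simp: ac_root_def)

lemma F_ac_eq:
  assumes "(s,t) \<in> ac_eq A" "ground s"
    and hv: "\<And>s t. (s,t) \<in> ctxt_cl (ac_root A) \<Longrightarrow> ground s \<Longrightarrow> ground t \<Longrightarrow> vE s = vE t"
  shows "(absF thy i vE s, absF thy i vE t) \<in> ac_eq A \<and> ground t"
  using assms(1,2) unfolding ac_eq_def
proof (induction rule: rtrancl_induct)
  case base then show ?case by simp
next
  case (step y z)
  have gy: "ground y" and Fy: "(absF thy i vE s, absF thy i vE y) \<in> (ctxt_cl (ac_root A) \<union> (ctxt_cl (ac_root A))\<inverse>)\<^sup>*"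
    using step by auto
  show ?case
  proof (cases "(y,z) \<in> ctxt_cl (ac_root A)")
    case True
    have gz: "ground z" using ac_vars[OF True] gy unfolding ground_def by simp
    have "absF thy i vE y = absF thy i vE z \<or> (absF thy i vE y, absF thy i vE z) \<in> ctxt_cl (ac_root A)"
      by (rule F_ac_step[OF True gy gz]) (rule hv)
    then have "absF thy i vE y = absF thy i vE z \<or> (absF thy i vE y, absF thy i vE z) \<in> ctxt_cl (ac_root A) \<union> (ctxt_cl (ac_root A))\<inverse>"
      by blast
    then show ?thesis using Fy gz by (auto intro: rtrancl_into_rtrancl)
  next
    case False
    then have zy: "(z,y) \<in> ctxt_cl (ac_root A)" using step by auto
    have gz: "ground z" using ac_vars[OF zy] gy unfolding ground_def by simp
    have "absF thy i vE z = absF thy i vE y \<or> (absF thy i vE z, absF thy i vE y) \<in> ctxt_cl (ac_root A)"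
      by (rule F_ac_step[OF zy gz gy]) (rule hv)
    then have "absF thy i vE y = absF thy i vE z \<or> (absF thy i vE y, absF thy i vE z) \<in> ctxt_cl (ac_root A) \<union> (ctxt_cl (ac_root A))\<inverse>"
      by auto
    then show ?thesis using Fy gz by (auto intro: rtrancl_into_rtrancl)
  qed
qed

lemma F_r:
  assumes rs: "\<And>l r. (l,r) \<in> R \<Longrightarrow> \<exists>j. pure_over (\<lambda>f. thy f = j) l \<and> pure_over (\<lambda>f. thy f = j) r \<and> rule_wf (l,r)"
    and st: "(s,t) \<in> ctxt_cl (rinst R)" and Qs: "quasi thy i A R s"
  shows "(absF thy i vE s, absF thy i vE t) \<in> ctxt_cl (rinst R) \<and> vars t \<subseteq> vars s"
  using st Qs
proof (induction rule: ctxt_cl.induct)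
  case (base a b)
  obtain \<sigma> l r where a: "a = subst \<sigma> l" and b: "b = subst \<sigma> r" and lr: "(l,r) \<in> R"
    using base(1) unfolding rinst_def by blast
  obtain g ls where l: "l = App (Th g) ls" and pl: "pure_over (\<lambda>f. thy f = thy g) l"
    and pr: "pure_over (\<lambda>f. thy f = thy g) r" and vr: "vars r \<subseteq> vars l"
    using rule_shape[OF rs lr] by blast
  have "(a,b) \<in> ctxt_cl (rinst R)" using base(1) by (rule ctxt_cl.base)
  then have "\<not> NF_mod A R a" by (rule rinst_notNF)
  moreover have "alien thy i a \<longrightarrow> NF_mod A R a"
    using base(2) subterms_refl[of a] unfolding quasi_def by blast
  ultimately have "\<not> alien thy i a" by blast
  moreover have "a = App (Th g) (map (subst \<sigma>) ls)" using a l by simp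
  ultimately have gi: "thy g = i" unfolding alien_def by blast
  have pl': "pure_over (\<lambda>f. thy f = i) l" using pl gi by simp
  have pr': "pure_over (\<lambda>f. thy f = i) r" using pr gi by simp
  have "absF thy i vE a = subst (\<lambda>x. absF thy i vE (\<sigma> x)) l"
    unfolding a by (rule F_pure[OF pl'])
  moreover have "absF thy i vE b = subst (\<lambda>x. absF thy i vE (\<sigma> x)) r"
    unfolding b by (rule F_pure[OF pr'])
  ultimately have "(absF thy i vE a, absF thy i vE b) \<in> rinst R"
    using lr unfolding rinst_def by blast
  moreover have "vars b \<subseteq> vars a" using vr unfolding a b vars_subst by blast
  ultimately show ?case by (auto intro: ctxt_cl.base)
next
  case (ctxt s t f ss us)
  have stp: "(App f (ss @ s # us), App f (ss @ t # us)) \<in> ctxt_cl (rinst R)"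
    using ctxt.hyps by (rule ctxt_cl.ctxt)
  have "\<not> NF_mod A R (App f (ss @ s # us))" using rinst_notNF[OF stp] .
  then have na: "\<not> alien thy i (App f (ss @ s # us))" using ctxt.prems Q_App by blast
  then obtain g where f: "f = Th g" and gi: "thy g = i" unfolding alien_def by auto
  have Qs: "quasi thy i A R s" using ctxt.prems by (simp add: Q_App)
  have IH: "(absF thy i vE s, absF thy i vE t) \<in> ctxt_cl (rinst R)" "vars t \<subseteq> vars s"
    using ctxt.IH[OF Qs] by auto
  from IH(1) have "(App (Th g) (map (absF thy i vE) ss @ absF thy i vE s # map (absF thy i vE) us),
                    App (Th g) (map (absF thy i vE) ss @ absF thy i vE t # map (absF thy i vE) us)) \<in> ctxt_cl (rinst R)"
    by (rule ctxt_cl.ctxt)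
  then show ?case using f gi IH(2) by auto
qed

theorem proposition2:
  fixes n :: nat
    and thy :: "'f \<Rightarrow> nat"
    and acs :: "nat \<Rightarrow> 'f option"
    and R :: "nat \<Rightarrow> (('n, 'v, 'f) trm \<times> ('n, 'v, 'f) trm) set"
    and vE :: "('n, 'v, 'f) trm \<Rightarrow> 'v"
    and i :: nat
    and M N :: "('n, 'v, 'f) trm"
  assumes sig: "\<forall>f. thy f \<in> {1..n}"
    and ac_sig: "\<forall>j f. acs j = Some f \<longrightarrow> thy f = j"
    and rules_sig: "\<forall>j\<in>{1..n}. \<forall>lr\<in>R j.
          pure_over (\<lambda>f. thy f = j) (fst lr) \<and> pure_over (\<lambda>f. thy f = j) (snd lr) \<and> rule_wf lr"
    and conv_each: "\<forall>j\<in>{1..n}. terminating_mod (set_option (acs j)) (R j)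
                                 \<and> confluent_mod (set_option (acs j)) (R j)"
    and conv: "terminating_mod (\<Union>j\<in>{1..n}. set_option (acs j)) (\<Union>j\<in>{1..n}. R j)
             \<and> confluent_mod (\<Union>j\<in>{1..n}. set_option (acs j)) (\<Union>j\<in>{1..n}. R j)"
    and vE: "\<forall>s t. ground s \<longrightarrow> ground t \<longrightarrow>
          (vE s = vE t \<longleftrightarrow> (s, t) \<in> eq_mod (\<Union>j\<in>{1..n}. set_option (acs j)) (\<Union>j\<in>{1..n}. R j))"
    and i: "i \<in> {1..n}"
    and gM: "ground M"
    and qM: "quasi thy i (\<Union>j\<in>{1..n}. set_option (acs j)) (\<Union>j\<in>{1..n}. R j) M"
    and red: "(M, N) \<in> (rstep_mod (\<Union>j\<in>{1..n}. set_option (acs j)) (\<Union>j\<in>{1..n}. R j))\<^sup>*"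
  shows "quasi thy i (\<Union>j\<in>{1..n}. set_option (acs j)) (\<Union>j\<in>{1..n}. R j) N
       \<and> (absF thy i vE M, absF thy i vE N)
           \<in> (rstep_mod (\<Union>j\<in>{1..n}. set_option (acs j)) (\<Union>j\<in>{1..n}. R j))\<^sup>*"
proof -
  define A where "A = (\<Union>j\<in>{1..n}. set_option (acs j))"
  define RR where "RR = (\<Union>j\<in>{1..n}. R j)"
  define F where "F = absF thy i vE"
  have rs: "\<And>l r. (l,r) \<in> RR \<Longrightarrow> \<exists>j. pure_over (\<lambda>f. thy f = j) l \<and> pure_over (\<lambda>f. thy f = j) r \<and> rule_wf (l,r)"
    using rules_sig unfolding RR_def by fastforce
  have hv: "\<And>s t. (s,t) \<in> ctxt_cl (ac_root A) \<Longrightarrow> ground s \<Longrightarrow> ground t \<Longrightarrow> vE s = vE t"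
    using vE unfolding A_def RR_def eq_mod_def by blast
  have "ground N \<and> quasi thy i A RR N \<and> (F M, F N) \<in> (rstep_mod A RR)\<^sup>*"
    using red unfolding A_def[symmetric] RR_def[symmetric]
  proof (induction rule: rtrancl_induct)
    case base then show ?case using gM qM unfolding A_def RR_def by simp
  next
    case (step y z)
    obtain y' z' where yy: "(y,y') \<in> ac_eq A" and yz: "(y',z') \<in> ctxt_cl (rinst RR)"
      and zz: "(z',z) \<in> ac_eq A"
      using step(2) unfolding rstep_mod_def rstep_def by blast
    have gy: "ground y" and Qy: "quasi thy i A RR y" and Fy: "(F M, F y) \<in> (rstep_mod A RR)\<^sup>*"
      using step by auto
    have Fyy: "(F y, F y') \<in> ac_eq A" and gy': "ground y'"
      using F_ac_eq[OF yy gy hv] unfolding F_def by auto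
    have Qy': "quasi thy i A RR y'" using Q_ac_eq[OF yy Qy] .
    have Fyz: "(F y', F z') \<in> ctxt_cl (rinst RR)" and vz: "vars z' \<subseteq> vars y'"
      using F_r[OF rs yz Qy'] unfolding F_def by auto
    have gz': "ground z'" using vz gy' unfolding ground_def by auto
    have Qz': "quasi thy i A RR z'"
    proof (rule Q_ctxt[OF yz Qy'])
      fix a b assume "(a,b) \<in> ctxt_cl (rinst RR)" "NF_mod A RR a"
      then show "NF_mod A RR b" using rinst_notNF by blast
    next
      fix a b assume "(a,b) \<in> rinst RR" "quasi thy i A RR a"
      then show "quasi thy i A RR b" using Q_rinst[OF rs] by blast
    qed
    have Fzz: "(F z', F z) \<in> ac_eq A" and gz: "ground z"
      using F_ac_eq[OF zz gz' hv] unfolding F_def by auto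
    have "(F y, F z) \<in> rstep_mod A RR"
      unfolding rstep_mod_def rstep_def using Fyy Fyz Fzz by blast
    then have "(F M, F z) \<in> (rstep_mod A RR)\<^sup>*" using Fy by (rule rtrancl_into_rtrancl[rotated])
    then show ?case using gz Q_ac_eq[OF zz Qz'] by blast
  qed
  then show ?thesis by (simp only: A_def RR_def F_def)
qed

end
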